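(* For every $\gamma>0$ and every dislocation measure $\nu$, there exists a family $(q_n,n\geq1)$ of probability distributions, $q_n$ on $\mathcal{P}_n$, with $q_n((n))<1$ for every $n\geq1$, such that $n^\gamma(1-s_1)\overline{q}_n(\mathrm{d}\mathbf{s})\to(1-s_1)\nu(\mathrm{d}\mathbf{s})$ weakly as finite non-negative measures on $\mathcal{S}^{\downarrow}$ as $n\to\infty$.
   Context: $\mathcal{P}_n$ is the set of partitions of the integer $n$ (non-increasing sequences $\lambda$ of positive integers with sum $n$), and $\mathcal{P}_1=\{(1),\emptyset\}$. $\mathcal{S}^{\downarrow}=\{\mathbf{s}=(s_1,s_2,\dots):s_1\geq s_2\geq\dots\geq0,\sum s_i\leq1\}$ with the $\ell^1$ metric; $\overline{q}_n$ is the measure on $\mathcal{S}^{\downarrow}$ defined by $\overline{q}_n(f)=\sum_{\lambda\in\mathcal{P}_n}q_n(\lambda)f(\lambda/n)$. A dislocation measure is a $\sigma$-finite measure $\nu$ on $\mathcal{S}^{\downarrow}$ with $\nu(\{(1,0,\dots)\})=0$, $\nu(\sum_i s_i<1)=0$ and $\int(1-s_1)\nu(\mathrm{d}\mathbf{s})<\infty$. *)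

theory Defs
  imports "HOL-Probability.Probability"
begin

text \<open>Elements of S-down are sequences indexed from 0: s 0 is the paper's s_1.\<close>

definition Sdown :: "(nat \<Rightarrow> real) set" where
  "Sdown = {s. antimono s \<and> (\<forall>i. 0 \<le> s i) \<and> summable s \<and> suminf s \<le> 1}"

definition l1dist :: "(nat \<Rightarrow> real) \<Rightarrow> (nat \<Rightarrow> real) \<Rightarrow> real" where
  "l1dist s t = (\<Sum>i. \<bar>s i - t i\<bar>)"

definition l1open :: "(nat \<Rightarrow> real) set \<Rightarrow> bool" where
  "l1open U \<longleftrightarrow> U \<subseteq> Sdown \<and>
     (\<forall>s\<in>U. \<exists>e>0. \<forall>t\<in>Sdown. l1dist s t < e \<longrightarrow> t \<in> U)"

definition Sdown_borel :: "(nat \<Rightarrow> real) measure" where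
  "Sdown_borel = sigma Sdown {U. l1open U}"

definition dislocation_measure :: "(nat \<Rightarrow> real) measure \<Rightarrow> bool" where
  "dislocation_measure \<nu> \<longleftrightarrow>
     sets \<nu> = sets Sdown_borel \<and>
     sigma_finite_measure \<nu> \<and>
     emeasure \<nu> {(\<lambda>i. if i = 0 then 1 else 0)} = 0 \<and>
     emeasure \<nu> {s \<in> Sdown. suminf s < 1} = 0 \<and>
     (\<integral>\<^sup>+ s. ennreal (1 - s 0) \<partial>\<nu>) < \<infinity>"

text \<open>Partitions of n as non-increasing lists of positive integers with sum n;
  by convention P_1 also contains the empty partition.\<close>
definition partitions :: "nat \<Rightarrow> nat list set" where
  "partitions n = {l. sorted_wrt (\<ge>) l \<and> (\<forall>x\<in>set l. 0 < x) \<and> sum_list l = n}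
                  \<union> (if n = 1 then {[]} else {})"

definition scaled :: "nat \<Rightarrow> nat list \<Rightarrow> nat \<Rightarrow> real" where
  "scaled n l = (\<lambda>i. if i < length l then real (l ! i) / real n else 0)"

definition qbar :: "nat \<Rightarrow> nat list pmf \<Rightarrow> ((nat \<Rightarrow> real) \<Rightarrow> real) \<Rightarrow> real" where
  "qbar n q f = (\<Sum>l\<in>partitions n. pmf q l * f (scaled n l))"

definition bounded_Sdown :: "((nat \<Rightarrow> real) \<Rightarrow> real) \<Rightarrow> bool" where
  "bounded_Sdown f \<longleftrightarrow> (\<exists>B. \<forall>s\<in>Sdown. \<bar>f s\<bar> \<le> B)"

definition l1_continuous_Sdown :: "((nat \<Rightarrow> real) \<Rightarrow> real) \<Rightarrow> bool" where
  "l1_continuous_Sdown f \<longleftrightarrow>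
     (\<forall>s\<in>Sdown. \<forall>e>0. \<exists>d>0. \<forall>t\<in>Sdown. l1dist s t < d \<longrightarrow> \<bar>f t - f s\<bar> < e)"

end

theory Submission
  imports Defs
begin

lemma Sdown_D:
  assumes "s \<in> Sdown"
  shows "antimono s" "\<And>i. 0 \<le> s i" "summable s" "suminf s \<le> 1"
  using assms by (auto simp: Sdown_def)

lemma Sdown_le_suminf: "s \<in> Sdown \<Longrightarrow> s i \<le> suminf s"
  using sum_le_suminf[of s "{i}"] by (auto simp: Sdown_def)

lemma Sdown_le1: "s \<in> Sdown \<Longrightarrow> s i \<le> 1"
  using Sdown_le_suminf[of s i] Sdown_D(4)[of s] by linarith

lemma l1_summable: "s \<in> Sdown \<Longrightarrow> t \<in> Sdown \<Longrightarrow> summable (\<lambda>i. \<bar>s i - t i\<bar>)"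
proof -
  assume s: "s \<in> Sdown" and t: "t \<in> Sdown"
  have "summable (\<lambda>i. s i + t i)" using s t by (intro summable_add) (auto simp: Sdown_def)
  have b: "\<And>n. norm \<bar>s n - t n\<bar> \<le> s n + t n"
    using Sdown_D(2)[OF s] Sdown_D(2)[OF t] by (simp add: abs_if)
  show ?thesis
    by (rule summable_comparison_test[OF _ \<open>summable (\<lambda>i. s i + t i)\<close>]) (use b in auto)
qed

lemma l1_coord: "s \<in> Sdown \<Longrightarrow> t \<in> Sdown \<Longrightarrow> \<bar>s i - t i\<bar> \<le> l1dist s t"
  unfolding l1dist_def using sum_le_suminf[OF l1_summable, of s t "{i}"] by auto

lemma l1_suminf: "s \<in> Sdown \<Longrightarrow> t \<in> Sdown \<Longrightarrow> \<bar>suminf s - suminf t\<bar> \<le> l1dist s t"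
proof -
  assume s: "s \<in> Sdown" and t: "t \<in> Sdown"
  have ss: "summable s" "summable t" using s t by (auto simp: Sdown_def)
  have "suminf s - suminf t = (\<Sum>i. s i - t i)" using suminf_diff[OF ss] by simp
  also have "\<bar>\<dots>\<bar> \<le> (\<Sum>i. \<bar>s i - t i\<bar>)"
    using summable_rabs[OF l1_summable[OF s t]] summable_diff[OF ss] l1_summable[OF s t]
    by (metis summable_rabs)
  finally show ?thesis unfolding l1dist_def .
qed

lemma space_Sdown_borel[simp]: "space Sdown_borel = Sdown"
  unfolding Sdown_borel_def by (rule space_measure_of) (auto simp: l1open_def)

lemma l1open_sets: "l1open U \<Longrightarrow> U \<in> sets Sdown_borel"
  unfolding Sdown_borel_def
  by (subst sets_measure_of) (auto simp: l1open_def)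

lemma cont_measurable:
  fixes g :: "(nat \<Rightarrow> real) \<Rightarrow> real"
  assumes "\<And>s e. s \<in> Sdown \<Longrightarrow> e > 0 \<Longrightarrow> \<exists>d>0. \<forall>t\<in>Sdown. l1dist s t < d \<longrightarrow> \<bar>g t - g s\<bar> < e"
  shows "g \<in> borel_measurable Sdown_borel"
proof (rule borel_measurableI)
  fix S :: "real set" assume "open S"
  have "l1open (g -` S \<inter> Sdown)"
    unfolding l1open_def
  proof safe
    fix s assume s: "s \<in> Sdown" "g s \<in> S"
    then obtain e where e: "e > 0" "\<forall>y. dist y (g s) < e \<longrightarrow> y \<in> S"
      using \<open>open S\<close> open_dist by metis
    obtain d where "d > 0" "\<forall>t\<in>Sdown. l1dist s t < d \<longrightarrow> \<bar>g t - g s\<bar> < e"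
      using assms[OF s(1) e(1)] by blast
    then show "\<exists>e>0. \<forall>t\<in>Sdown. l1dist s t < e \<longrightarrow> t \<in> g -` S \<inter> Sdown"
      using e by (auto simp: dist_real_def intro!: exI[of _ d])
  qed
  then show "g -` S \<inter> space Sdown_borel \<in> sets Sdown_borel"
    using l1open_sets by simp
qed

lemma coord_measurable[measurable]: "(\<lambda>s. s i) \<in> borel_measurable Sdown_borel"
proof (rule cont_measurable)
  fix s :: "nat \<Rightarrow> real" and e :: real assume "s \<in> Sdown" "e > 0"
  then show "\<exists>d>0. \<forall>t\<in>Sdown. l1dist s t < d \<longrightarrow> \<bar>t i - s i\<bar> < e"
    using l1_coord[of s _ i] by (intro exI[of _ e]) (auto simp: abs_minus_commute intro: le_less_trans)
qed

lemma suminf_measurable[measurable]: "(\<lambda>s. suminf s) \<in> borel_measurable Sdown_borel"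
proof (rule cont_measurable)
  fix s :: "nat \<Rightarrow> real" and e :: real assume "s \<in> Sdown" "e > 0"
  then show "\<exists>d>0. \<forall>t\<in>Sdown. l1dist s t < d \<longrightarrow> \<bar>suminf t - suminf s\<bar> < e"
    using l1_suminf[of s] by (intro exI[of _ e]) (auto simp: abs_minus_commute intro: le_less_trans)
qed

lemma f_measurable:
  "l1_continuous_Sdown f \<Longrightarrow> f \<in> borel_measurable Sdown_borel"
  unfolding l1_continuous_Sdown_def by (rule cont_measurable) auto


definition afl :: "nat \<Rightarrow> (nat \<Rightarrow> real) \<Rightarrow> nat \<Rightarrow> nat" where
  "afl n s i = nat \<lfloor>real n * s i\<rfloor>"
definition kk :: "nat \<Rightarrow> (nat \<Rightarrow> real) \<Rightarrow> nat" where
  "kk n s = (LEAST i. afl n s i = 0)"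
definition rr :: "nat \<Rightarrow> (nat \<Rightarrow> real) \<Rightarrow> nat" where
  "rr n s = n - (\<Sum>i<kk n s. afl n s i)"
definition piL :: "nat \<Rightarrow> (nat \<Rightarrow> real) \<Rightarrow> nat list" where
  "piL n s = map (afl n s) [0..<kk n s] @ replicate (rr n s) 1"

lemma afl_mono: "s \<in> Sdown \<Longrightarrow> i \<le> j \<Longrightarrow> afl n s j \<le> afl n s i"
  unfolding afl_def using Sdown_D(1)[of s]
  by (auto intro!: nat_mono floor_mono mult_left_mono dest: antimonoD)

lemma afl_le: "s \<in> Sdown \<Longrightarrow> real (afl n s i) \<le> real n * s i"
  unfolding afl_def using Sdown_D(2)[of s i] by simp

lemma afl_gt: "s \<in> Sdown \<Longrightarrow> real n * s i - 1 < real (afl n s i)"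
  unfolding afl_def using Sdown_D(2)[of s i] by linarith

lemma s_small: assumes "s \<in> Sdown" shows "real (Suc i) * s i \<le> 1"
proof -
  have "real (Suc i) * s i = (\<Sum>j<Suc i. s i)" by simp
  also have "\<dots> \<le> (\<Sum>j<Suc i. s j)"
  proof (intro sum_mono)
    fix j assume "j \<in> {..<Suc i}"
    then show "s i \<le> s j" using antimonoD[OF Sdown_D(1)[OF assms], of j i] by simp
  qed
  also have "\<dots> \<le> suminf s"
    using Sdown_D[OF assms] by (intro sum_le_suminf) auto
  finally show ?thesis using Sdown_D(4)[OF assms] by simp
qed

lemma afl_n: assumes "s \<in> Sdown" shows "afl n s n = 0"
proof -
  have "real n * s n < 1"
    using s_small[OF assms, of n] Sdown_D(2)[OF assms, of n]
    by (cases "s n = 0") (auto simp: algebra_simps)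
  then show ?thesis unfolding afl_def by linarith
qed

lemma kk_le: "s \<in> Sdown \<Longrightarrow> kk n s \<le> n"
  unfolding kk_def by (rule Least_le) (rule afl_n)

lemma afl_pos: "i < kk n s \<Longrightarrow> 0 < afl n s i"
  unfolding kk_def using not_less_Least by blast

lemma afl_zero: assumes "s \<in> Sdown" "kk n s \<le> i" shows "afl n s i = 0"
proof -
  have "afl n s (kk n s) = 0" unfolding kk_def by (rule LeastI[of _ n]) (rule afl_n[OF assms(1)])
  then show ?thesis using afl_mono[OF assms(1) assms(2), of n] by simp
qed

lemma sum_afl_le: assumes "s \<in> Sdown" shows "(\<Sum>i<m. afl n s i) \<le> n"
proof -
  have "real (\<Sum>i<m. afl n s i) = (\<Sum>i<m. real (afl n s i))" by simp
  also have "\<dots> \<le> (\<Sum>i<m. real n * s i)" by (intro sum_mono afl_le[OF assms])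
  also have "\<dots> = real n * (\<Sum>i<m. s i)" by (simp add: sum_distrib_left)
  also have "\<dots> \<le> real n * 1"
    using Sdown_D[OF assms] sum_le_suminf[of s "{..<m}"]
    by (intro mult_left_mono) auto
  finally show ?thesis by (metis of_nat_le_iff mult_1_right)
qed

lemma real_rr: "s \<in> Sdown \<Longrightarrow> real (rr n s) = real n - (\<Sum>i<kk n s. real (afl n s i))"
  unfolding rr_def using sum_afl_le[where s=s and m="kk n s" and n=n] by (simp add: of_nat_diff)

lemma partitions_iff: "l \<in> partitions n \<longleftrightarrow>
   (sorted_wrt (\<ge>) l \<and> (\<forall>x\<in>set l. 0 < x) \<and> sum_list l = n) \<or> (n = 1 \<and> l = [])"
  unfolding partitions_def by auto

lemma piL_partition: assumes "s \<in> Sdown" shows "piL n s \<in> partitions n"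
proof -
  have s1: "sorted_wrt (\<ge>) (map (afl n s) [0..<kk n s])"
    unfolding sorted_wrt_map
    by (rule sorted_wrt_mono_rel[OF _ sorted_wrt_upt]) (use afl_mono[OF assms] in auto)
  have s2: "sorted_wrt (\<ge>) (replicate (rr n s) (1::nat))"
    by (simp add: sorted_wrt_iff_nth_less)
  have s3: "\<forall>x\<in>set (map (afl n s) [0..<kk n s]). \<forall>y\<in>set (replicate (rr n s) (1::nat)). y \<le> x"
    using afl_pos[of _ n s] by (auto simp: Suc_le_eq)
  have "sum_list (piL n s) = (\<Sum>i<kk n s. afl n s i) + rr n s"
    unfolding piL_def by (simp add: sum_set_upt_conv_sum_list_nat[symmetric] atLeast0LessThan sum_list_replicate)
  also have "\<dots> = n" unfolding rr_def using sum_afl_le[OF assms] by simp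
  finally have sum: "sum_list (piL n s) = n" .
  have s4: "\<forall>x\<in>set (piL n s). 0 < x" unfolding piL_def using afl_pos[of _ n s] by auto
  have s5: "sorted_wrt (\<ge>) (piL n s)" unfolding piL_def using s1 s2 s3 by (simp add: sorted_wrt_append)
  show ?thesis unfolding partitions_iff using sum s4 s5 by blast
qed

lemma length_le_sum_list: "(\<forall>x\<in>set l. (0::nat) < x) \<Longrightarrow> length l \<le> sum_list l"
  by (induction l) auto

lemma partitions_finite: "finite (partitions n)"
proof -
  have "partitions n \<subseteq> {xs. set xs \<subseteq> {0..n} \<and> length xs \<le> n} \<union> {[]}"
  proof
    fix l assume "l \<in> partitions n"
    then consider "l = []" | "(\<forall>x\<in>set l. 0 < x) \<and> sum_list l = n"
      unfolding partitions_iff by auto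
    then show "l \<in> {xs. set xs \<subseteq> {0..n} \<and> length xs \<le> n} \<union> {[]}"
    proof cases
      case 2
      have "set l \<subseteq> {0..n}" using 2 member_le_sum_list[of _ l] by auto
      moreover have "length l \<le> sum_list l"
        using 2 length_le_sum_list by blast
      ultimately show ?thesis using 2 by auto
    qed simp
  qed
  moreover have "finite ({xs. set xs \<subseteq> {0..n} \<and> length xs \<le> n} \<union> {[]})"
    using finite_lists_length_le[of "{0..n}" n] by simp
  ultimately show ?thesis by (rule finite_subset)
qed

lemma scaled_Sdown: assumes "l \<in> partitions n" "1 \<le> n" shows "scaled n l \<in> Sdown"
proof -
  from assms(1) have sorted: "sorted_wrt (\<ge>) l" and sl: "sum_list l \<le> n"
    unfolding partitions_iff by auto
  have mono: "antimono (scaled n l)"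
  proof (rule antimonoI)
    fix i j :: nat assume ij: "i \<le> j"
    show "scaled n l j \<le> scaled n l i"
    proof (cases "j < length l")
      case True
      then have "l ! j \<le> l ! i"
        using ij sorted by (cases "i = j") (auto simp: sorted_wrt_iff_nth_less)
      then show ?thesis using True ij by (auto simp: scaled_def divide_right_mono)
    qed (auto simp: scaled_def)
  qed
  have fin: "\<And>i. i \<notin> {..<length l} \<Longrightarrow> scaled n l i = 0" by (auto simp: scaled_def)
  have "suminf (scaled n l) = (\<Sum>i<length l. scaled n l i)" by (rule suminf_finite) (use fin in auto)
  also have "\<dots> = (\<Sum>i<length l. real (l ! i)) / real n"
    by (simp add: scaled_def sum_divide_distrib)
  also have "\<dots> = real (sum_list l) / real n"
    by (simp add: sum_list_sum_nth atLeast0LessThan)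
  also have "\<dots> \<le> 1" using sl assms(2) by simp
  finally show ?thesis
    unfolding Sdown_def using mono summable_finite[of "{..<length l}" "scaled n l"] fin
    by (auto simp: scaled_def)
qed

lemma scaled_piL: assumes "s \<in> Sdown"
  shows "scaled n (piL n s) i = real (afl n s i) / real n +
           (if kk n s \<le> i \<and> i < kk n s + rr n s then 1 / real n else 0)"
proof -
  consider "i < kk n s" | "kk n s \<le> i" "i < kk n s + rr n s" | "kk n s + rr n s \<le> i" by linarith
  then show ?thesis
  proof cases
    case 1 then show ?thesis by (simp add: scaled_def piL_def nth_append)
  next
    case 2 then show ?thesis using afl_zero[OF assms 2(1)]
      by (simp add: scaled_def piL_def nth_append)
  next
    case 3 then show ?thesis using afl_zero[OF assms, of n i]
      by (simp add: scaled_def piL_def nth_append)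
  qed
qed


lemma afl_div: assumes "s \<in> Sdown" "1 \<le> n"
  shows "s i - 1 / real n \<le> real (afl n s i) / real n"
proof -
  have "real n * s i - 1 < real (afl n s i)" by (rule afl_gt[OF assms(1)])
  then have "(real n * s i - 1) / real n \<le> real (afl n s i) / real n"
    by (intro divide_right_mono) auto
  moreover have "(real n * s i - 1) / real n = s i - 1 / real n" using assms(2) by (simp add: field_simps)
  ultimately show ?thesis by simp
qed

lemma t0_ge: assumes "s \<in> Sdown" "1 \<le> n"
  shows "s 0 - 1 / real n \<le> scaled n (piL n s) 0"
proof -
  have "s 0 - 1 / real n \<le> real (afl n s 0) / real n" by (rule afl_div[OF assms])
  moreover have "0 \<le> (if kk n s \<le> 0 \<and> 0 < kk n s + rr n s then 1 / real n else 0)" by auto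
  ultimately show ?thesis unfolding scaled_piL[OF assms(1)] by linarith
qed

definition DD :: "nat \<Rightarrow> (nat \<Rightarrow> real) \<Rightarrow> real" where
  "DD n s = 1 - (\<Sum>i<kk n s. real (afl n s i)) / real n"

lemma l1_bound: assumes s: "s \<in> Sdown" and n: "1 \<le> n" and one: "suminf s = 1"
  shows "l1dist s (scaled n (piL n s)) \<le> 2 * DD n s"
proof -
  define u where "u i = real (afl n s i) / real n" for i
  define v where "v i = (if kk n s \<le> i \<and> i < kk n s + rr n s then 1 / real n else 0)" for i
  have t: "scaled n (piL n s) i = u i + v i" for i unfolding u_def v_def by (rule scaled_piL[OF s])
  have u0: "\<And>i. i \<notin> {..<kk n s} \<Longrightarrow> u i = 0" by (simp add: u_def afl_zero[OF s] not_less)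
  have v0: "\<And>i. i \<notin> {kk n s..<kk n s + rr n s} \<Longrightarrow> v i = 0" unfolding v_def by auto
  have su: "summable u" by (rule summable_finite[of "{..<kk n s}"]) (use u0 in auto)
  have sv: "summable v" by (rule summable_finite[of "{kk n s..<kk n s + rr n s}"]) (use v0 in auto)
  have ss: "summable s" using s by (simp add: Sdown_def)
  have uu: "suminf u = (\<Sum>i<kk n s. real (afl n s i)) / real n"
    by (subst suminf_finite[of "{..<kk n s}"]) (use u0 in \<open>auto simp: u_def sum_divide_distrib\<close>)
  have vv: "suminf v = real (rr n s) / real n"
    by (subst suminf_finite[of "{kk n s..<kk n s + rr n s}"]) (use v0 in \<open>auto simp: v_def\<close>)
  have le: "\<bar>s i - scaled n (piL n s) i\<bar> \<le> (s i - u i) + v i" for i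
  proof -
    have "u i \<le> s i" unfolding u_def using afl_le[OF s, of n i] n by (simp add: field_simps)
    moreover have "0 \<le> v i" unfolding v_def by auto
    ultimately show ?thesis unfolding t by (simp add: abs_if)
  qed
  have "l1dist s (scaled n (piL n s)) \<le> (\<Sum>i. (s i - u i) + v i)"
    unfolding l1dist_def
    by (intro suminf_le le l1_summable s scaled_Sdown piL_partition n summable_add summable_diff ss su sv)
  also have "\<dots> = suminf s - suminf u + suminf v"
    using suminf_add[OF summable_diff[OF ss su] sv] suminf_diff[OF ss su] by simp
  also have "\<dots> = 2 * DD n s"
    unfolding one uu vv DD_def real_rr[OF s] using n by (simp add: field_simps)
  finally show ?thesis .
qed

lemma DD_nonneg: assumes s: "s \<in> Sdown" and n: "1 \<le> n" shows "0 \<le> DD n s"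
  using real_rr[OF s, of n] n unfolding DD_def by (simp add: field_simps)

lemma DD_le: assumes s: "s \<in> Sdown" and n: "1 \<le> n"
  shows "DD n s \<le> 1 - (\<Sum>i<M. s i) + real M / real n"
proof -
  have "(\<Sum>i<M. real (afl n s i)) \<le> (\<Sum>i<kk n s. real (afl n s i))"
  proof -
    have "(\<Sum>i<M. real (afl n s i)) = (\<Sum>i\<in>{..<M} \<inter> {..<kk n s}. real (afl n s i))"
      by (rule sum.mono_neutral_right) (auto, metis afl_zero[OF s] leI less_irrefl)
    also have "\<dots> \<le> (\<Sum>i<kk n s. real (afl n s i))" by (rule sum_mono2) auto
    finally show ?thesis .
  qed
  moreover have "(\<Sum>i<M. s i) - real M / real n \<le> (\<Sum>i<M. real (afl n s i)) / real n"
  proof -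
    have "(\<Sum>i<M. s i) - real M / real n = (\<Sum>i<M. s i - 1 / real n)" by (simp add: sum_subtractf)
    also have "\<dots> \<le> (\<Sum>i<M. real (afl n s i) / real n)"
      using afl_div[OF s n] by (intro sum_mono) auto
    finally show ?thesis by (simp add: sum_divide_distrib)
  qed
  ultimately show ?thesis unfolding DD_def using n by (smt (verit) divide_right_mono of_nat_0_le_iff)
qed

lemma DD_lim: assumes s: "s \<in> Sdown" and one: "suminf s = 1"
  shows "(\<lambda>n. DD n s) \<longlonglongrightarrow> 0"
proof (rule LIMSEQ_I)
  fix r :: real assume r: "0 < r"
  have "(\<lambda>M. \<Sum>i<M. s i) \<longlonglongrightarrow> 1"
    using summable_LIMSEQ[of s] s one by (simp add: Sdown_def)
  then obtain M where "\<forall>n\<ge>M. norm ((\<Sum>i<n. s i) - 1) < r / 2"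
    using LIMSEQ_D[of _ 1 "r/2"] r by (meson half_gt_zero)
  then have M: "\<bar>(\<Sum>i<M. s i) - 1\<bar> < r / 2" by auto
  obtain N :: nat where N: "real M * 2 / r < real N" using reals_Archimedean2 by blast
  show "\<exists>no. \<forall>n\<ge>no. norm (DD n s - 0) < r"
  proof (intro exI allI impI)
    fix n assume n: "Suc N \<le> n"
    then have n1: "1 \<le> n" by simp
    have "real M / real n < r / 2"
    proof -
      have "real M * 2 / r < real n" using N n by linarith
      then show ?thesis using r n1 by (simp add: field_simps)
    qed
    then have "DD n s < r"
      using DD_le[OF s n1, of M] M[unfolded abs_less_iff] by linarith
    then show "norm (DD n s - 0) < r" using DD_nonneg[OF s n1] by simp
  qed
qed

lemma l1_lim: assumes s: "s \<in> Sdown" and one: "suminf s = 1"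
  shows "(\<lambda>n. l1dist s (scaled n (piL n s))) \<longlonglongrightarrow> 0"
proof (rule tendsto_sandwich[of "\<lambda>_. 0" _ _ "\<lambda>n. 2 * DD n s"])
  show "\<forall>\<^sub>F n in sequentially. 0 \<le> l1dist s (scaled n (piL n s))"
    using eventually_ge_at_top[of 1]
  proof eventually_elim
    case (elim n)
    then show ?case unfolding l1dist_def
      by (intro suminf_nonneg l1_summable s scaled_Sdown piL_partition) auto
  qed
  show "\<forall>\<^sub>F n in sequentially. l1dist s (scaled n (piL n s)) \<le> 2 * DD n s"
    using eventually_ge_at_top[of 1] by eventually_elim (rule l1_bound[OF s _ one])
  show "(\<lambda>n. 2 * DD n s) \<longlonglongrightarrow> 0" using tendsto_mult_right_zero[OF DD_lim[OF s one]] .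
qed simp


lemma afl_meas[measurable]: "(\<lambda>s. afl n s i) \<in> measurable Sdown_borel (count_space UNIV)"
  unfolding afl_def by measurable

lemma map_meas:
  assumes "\<And>i. (\<lambda>s. g i s) \<in> measurable M (count_space UNIV)"
  shows "(\<lambda>s. map (\<lambda>i. g i s) xs) \<in> measurable M (count_space (UNIV :: 'b::countable list set))"
proof (induction xs)
  case Nil
  then show ?case by simp
next
  case (Cons x xs)
  have "(\<lambda>s. (\<lambda>y s. y # map (\<lambda>i. g i s) xs) (g x s) s) \<in> measurable M (count_space UNIV)"
  proof (rule measurable_compose_countable[OF _ assms])
    fix y :: 'b
    show "(\<lambda>s. y # map (\<lambda>i. g i s) xs) \<in> measurable M (count_space UNIV)"
      using measurable_comp[OF Cons.IH measurable_count_space[of "(#) y" UNIV]] by (simp add: comp_def)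
  qed
  then show ?case by simp
qed

definition Phi :: "nat \<Rightarrow> nat list \<Rightarrow> nat list" where
  "Phi n xs = (let k = (LEAST i. xs ! i = 0) in
     map (\<lambda>i. xs ! i) [0..<k] @ replicate (n - (\<Sum>i<k. xs ! i)) 1)"

lemma piL_Phi: assumes s: "s \<in> Sdown"
  shows "piL n s = Phi n (map (\<lambda>i. afl n s i) [0..<Suc n])"
proof -
  define xs where "xs = map (\<lambda>i. afl n s i) [0..<Suc n]"
  have nth: "\<And>i. i \<le> n \<Longrightarrow> xs ! i = afl n s i"
    unfolding xs_def by (simp add: less_Suc_eq_le del: upt_Suc)
  have kkn: "kk n s \<le> n" by (rule kk_le[OF s])
  have L: "(LEAST i. xs ! i = 0) = kk n s"
  proof (rule Least_equality)
    show "xs ! kk n s = 0" using nth[OF kkn] afl_zero[OF s, of n "kk n s"] by simp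
    fix y assume y: "xs ! y = 0"
    show "kk n s \<le> y"
    proof (rule ccontr)
      assume "\<not> kk n s \<le> y"
      then have "y < kk n s" by simp
      then show False using afl_pos[of y n s] nth[of y] kkn y by simp
    qed
  qed
  have m: "map (\<lambda>i. xs ! i) [0..<kk n s] = map (afl n s) [0..<kk n s]"
    using nth kkn by (auto intro!: map_cong)
  have su: "(\<Sum>i<kk n s. xs ! i) = (\<Sum>i<kk n s. afl n s i)"
    using nth kkn by (auto intro!: sum.cong)
  show ?thesis unfolding xs_def[symmetric] Phi_def Let_def L m su piL_def rr_def ..
qed

lemma piL_meas[measurable]: "piL n \<in> measurable Sdown_borel (count_space UNIV)"
proof -
  have "(\<lambda>s. map (\<lambda>i. afl n s i) [0..<Suc n]) \<in> measurable Sdown_borel (count_space UNIV)"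
    by (rule map_meas[where g="\<lambda>i s. afl n s i"]) (rule afl_meas)
  from measurable_comp[OF this measurable_count_space[of "Phi n" UNIV]]
  have "(\<lambda>s. Phi n (map (\<lambda>i. afl n s i) [0..<Suc n])) \<in> measurable Sdown_borel (count_space UNIV)"
    by (simp add: comp_def del: upt_Suc)
  then show ?thesis
    by (subst measurable_cong[where g="\<lambda>s. Phi n (map (\<lambda>i. afl n s i) [0..<Suc n])"])
       (auto simp: piL_Phi simp del: upt_Suc)
qed

lemma integral_finite_range:
  fixes M :: "'a measure" and p :: "'a \<Rightarrow> 'b" and h :: "'b \<Rightarrow> real"
  assumes p: "p \<in> measurable M (count_space UNIV)" and P: "finite P" and PP: "\<And>x. x \<in> space M \<Longrightarrow> p x \<in> P"
    and G: "G \<in> sets M" "emeasure M G < \<infinity>"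
  shows "(\<integral>x. indicator G x * h (p x) \<partial>M) = (\<Sum>l\<in>P. measure M (G \<inter> p -` {l} \<inter> space M) * h l)"
proof -
  have sets: "G \<inter> p -` {l} \<inter> space M \<in> sets M" for l
    using measurable_sets[OF p, of "{l}"] G(1) by (auto simp: Int_assoc intro: sets.Int)
  have fin: "emeasure M (G \<inter> p -` {l} \<inter> space M) < \<infinity>" for l
    by (rule le_less_trans[OF emeasure_mono G(2)]) (auto simp: G(1))
  have "(\<integral>x. indicator G x * h (p x) \<partial>M) =
        (\<integral>x. (\<Sum>l\<in>P. indicator (G \<inter> p -` {l} \<inter> space M) x * h l) \<partial>M)"
  proof (rule Bochner_Integration.integral_cong[OF refl])
    fix x assume x: "x \<in> space M"
    have "(\<Sum>l\<in>P. indicator (G \<inter> p -` {l} \<inter> space M) x * h l) =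
          (\<Sum>l\<in>P. if l = p x then indicator G x * h l else 0)"
      using x by (intro sum.cong) (auto split: split_indicator)
    also have "\<dots> = indicator G x * h (p x)" using PP[OF x] P by (simp add: sum.delta')
    finally show "indicator G x * h (p x) = (\<Sum>l\<in>P. indicator (G \<inter> p -` {l} \<inter> space M) x * h l)" ..
  qed
  also have "\<dots> = (\<Sum>l\<in>P. \<integral>x. indicator (G \<inter> p -` {l} \<inter> space M) x * h l \<partial>M)"
    by (rule Bochner_Integration.integral_sum) (use sets fin in auto)
  also have "\<dots> = (\<Sum>l\<in>P. measure M (G \<inter> p -` {l} \<inter> space M) * h l)"
    by (simp add: Int_assoc)
  finally show ?thesis .
qed

lemma integrable_finite_range:
  fixes M :: "'a measure" and p :: "'a \<Rightarrow> 'b" and h :: "'b \<Rightarrow> real"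
  assumes p: "p \<in> measurable M (count_space UNIV)" and P: "finite P" and PP: "\<And>x. x \<in> space M \<Longrightarrow> p x \<in> P"
    and G: "G \<in> sets M" "emeasure M G < \<infinity>"
  shows "integrable M (\<lambda>x. indicator G x * h (p x))"
proof (rule Bochner_Integration.integrable_bound[where f="\<lambda>x. indicator G x * (\<Sum>l\<in>P. \<bar>h l\<bar>)"])
  show "integrable M (\<lambda>x. indicator G x * (\<Sum>l\<in>P. \<bar>h l\<bar>))"
    using G by (intro integrable_mult_left integrable_real_indicator)
  show "(\<lambda>x. indicator G x * h (p x)) \<in> borel_measurable M"
    using measurable_comp[OF p, of h borel] G
    by (intro borel_measurable_times borel_measurable_indicator) (auto simp: comp_def)
  show "AE x in M. norm (indicator G x * h (p x)) \<le> norm (indicator G x * (\<Sum>l\<in>P. \<bar>h l\<bar>))"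
  proof (rule AE_I2)
    fix x assume x: "x \<in> space M"
    have "\<bar>h (p x)\<bar> \<le> (\<Sum>l\<in>P. \<bar>h l\<bar>)"
      using member_le_sum[of "p x" P "\<lambda>l. \<bar>h l\<bar>"] PP[OF x] P by auto
    then show "norm (indicator G x * h (p x)) \<le> norm (indicator G x * (\<Sum>l\<in>P. \<bar>h l\<bar>))"
      by (auto split: split_indicator)
  qed
qed


lemma f_conv:
  assumes f: "l1_continuous_Sdown f" and x: "x \<in> Sdown"
    and t: "eventually (\<lambda>n. t n \<in> Sdown) sequentially"
    and l: "(\<lambda>n. l1dist x (t n)) \<longlonglongrightarrow> 0"
  shows "(\<lambda>n. f (t n)) \<longlonglongrightarrow> f x"
proof (rule tendstoI)
  fix e :: real assume e: "0 < e"
  obtain d where d: "d > 0" "\<forall>u\<in>Sdown. l1dist x u < d \<longrightarrow> \<bar>f u - f x\<bar> < e"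
    using f x e unfolding l1_continuous_Sdown_def by blast
  have "eventually (\<lambda>n. l1dist x (t n) < d) sequentially"
    using order_tendstoD(2)[OF l d(1)] .
  with t show "eventually (\<lambda>n. dist (f (t n)) (f x) < e) sequentially"
    by eventually_elim (use d in \<open>auto simp: dist_real_def\<close>)
qed

lemma eps_lim: assumes "\<gamma> > 0"
  shows "(\<lambda>n. 1 / real n + c * real n powr (- \<gamma>)) \<longlonglongrightarrow> 0"
proof -
  have "(\<lambda>n. real n powr (- \<gamma>)) \<longlonglongrightarrow> 0"
    by (rule tendsto_neg_powr) (use assms filterlim_real_sequentially in auto)
  moreover have "(\<lambda>n. 1 / real n) \<longlonglongrightarrow> 0"
    by (rule tendsto_divide_0[OF tendsto_const]) (rule filterlim_at_top_imp_at_infinity[OF filterlim_real_sequentially])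
  ultimately show ?thesis using tendsto_add[of _ 0 _ _ 0] tendsto_mult_right_zero by fastforce
qed

lemma t1: "\<not> (X::ennreal) < \<infinity> \<Longrightarrow> X = \<infinity>"
  by (simp add: not_less top_unique)
lemma markov_aux:
  assumes "0 < e" "ennreal e * X \<le> ennreal C" shows "X < \<infinity>"
proof (rule ccontr)
  assume "\<not> X < \<infinity>"
  then have "X = \<infinity>" by (rule t1)
  moreover have "ennreal e \<noteq> 0" using assms(1) by simp
  ultimately have "ennreal e * X = \<infinity>" by (simp add: ennreal_mult_top)
  then show False using assms(2) by (simp add: top_unique)
qed

lemma markov_aux2:
  assumes "0 < e" "0 \<le> C" "0 \<le> y" "ennreal e * ennreal y \<le> ennreal C" shows "e * y \<le> C"
proof -
  have "ennreal (e * y) \<le> ennreal C" using assms by (simp add: ennreal_mult)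
  then show ?thesis using assms(2) by (simp only: ennreal_le_iff)
qed

lemma lstar_part: "1 \<le> n \<Longrightarrow> (if n = 1 then [] else replicate n (1::nat)) \<in> partitions n"
  unfolding partitions_iff by (auto simp: sorted_wrt_iff_nth_less sum_list_replicate)

lemma single_part: "1 \<le> n \<Longrightarrow> [n] \<in> partitions n"
  unfolding partitions_iff by auto

lemma lstar_ne: "1 \<le> n \<Longrightarrow> (if n = 1 then [] else replicate n (1::nat)) \<noteq> [n]"
  by (cases n) auto


theorem proposition4:
  fixes \<gamma> :: real and \<nu> :: "(nat \<Rightarrow> real) measure"
  assumes "\<gamma> > 0" and "dislocation_measure \<nu>"
  shows "\<exists>q :: nat \<Rightarrow> nat list pmf.
           (\<forall>n\<ge>1. set_pmf (q n) \<subseteq> partitions n \<and> pmf (q n) [n] < 1) \<and>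
           (\<forall>f. bounded_Sdown f \<and> l1_continuous_Sdown f \<longrightarrow>
              (\<lambda>n. real n powr \<gamma> * qbar n (q n) (\<lambda>s. (1 - s 0) * f s))
                \<longlonglongrightarrow> (\<integral>s. (1 - s 0) * f s \<partial>\<nu>))"
proof -
  from assms(2) have sets_eq: "sets \<nu> = sets Sdown_borel"
    and nn: "(\<integral>\<^sup>+ s. ennreal (1 - s 0) \<partial>\<nu>) < \<infinity>"
    and null: "emeasure \<nu> {s \<in> Sdown. suminf s < 1} = 0"
    unfolding dislocation_measure_def by auto
  have space_eq: "space \<nu> = Sdown" using sets_eq_imp_space_eq[OF sets_eq] by simp
  have meq: "\<And>N. measurable \<nu> N = measurable Sdown_borel N"
    by (rule measurable_cong_sets[OF sets_eq refl])
  have s0le: "\<And>s. s \<in> Sdown \<Longrightarrow> 0 \<le> 1 - s 0" by (simp add: Sdown_le1)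
  have int1: "integrable \<nu> (\<lambda>s. 1 - s 0)"
  proof (rule integrableI_nonneg)
    show "(\<lambda>s. 1 - s 0) \<in> borel_measurable \<nu>" unfolding meq by measurable
    show "AE s in \<nu>. 0 \<le> 1 - s 0" by (rule AE_I2) (auto simp: space_eq intro: Sdown_le1)
    show "(\<integral>\<^sup>+ s. ennreal (1 - s 0) \<partial>\<nu>) < \<infinity>" by (rule nn)
  qed
  define C where "C = (\<integral>s. 1 - s 0 \<partial>\<nu>)"
  have C0: "0 \<le> C" unfolding C_def by (rule Bochner_Integration.integral_nonneg) (auto simp: space_eq intro: Sdown_le1)
  have nnC: "(\<integral>\<^sup>+ s. ennreal (1 - s 0) \<partial>\<nu>) = ennreal C"
    unfolding C_def by (rule nn_integral_eq_integral[OF int1]) (rule AE_I2, auto simp: space_eq intro: Sdown_le1)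
  define eps where "eps n = 1 / real n + 2 * (C + 1) * real n powr (- \<gamma>)" for n :: nat
  define G where "G n = {s \<in> Sdown. eps n \<le> 1 - s 0}" for n
  have Gsets: "G n \<in> sets \<nu>" for n
  proof -
    have "{s \<in> space Sdown_borel. eps n \<le> 1 - s 0} \<in> sets Sdown_borel" by measurable
    then show ?thesis unfolding G_def sets_eq by simp
  qed
  have eps_pos: "0 < eps n" if n: "1 \<le> n" for n
  proof -
    have "0 < 1 / real n" using n by simp
    moreover have "0 \<le> 2 * (C + 1) * real n powr (- \<gamma>)" using C0 by simp
    ultimately show ?thesis unfolding eps_def by linarith
  qed
  have markov: "emeasure \<nu> (G n) < \<infinity> \<and> eps n * measure \<nu> (G n) \<le> C" if n: "1 \<le> n" for n
  proof -
    have "ennreal (eps n) * emeasure \<nu> (G n) = (\<integral>\<^sup>+ s. ennreal (eps n) * indicator (G n) s \<partial>\<nu>)"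
      by (rule nn_integral_cmult_indicator[OF Gsets, symmetric])
    also have "\<dots> \<le> (\<integral>\<^sup>+ s. ennreal (1 - s 0) \<partial>\<nu>)"
      by (rule nn_integral_mono) (auto simp: G_def split: split_indicator intro: ennreal_leI)
    also have "\<dots> = ennreal C" by (rule nnC)
    finally have le: "ennreal (eps n) * emeasure \<nu> (G n) \<le> ennreal C" .
    have fin: "emeasure \<nu> (G n) < \<infinity>" by (rule markov_aux[OF eps_pos[OF n] le])
    then have "emeasure \<nu> (G n) = ennreal (measure \<nu> (G n))"
      by (intro emeasure_eq_ennreal_measure) simp
    then have "eps n * measure \<nu> (G n) \<le> C"
      using le by (intro markov_aux2[OF eps_pos[OF n] C0]) auto
    then show ?thesis using fin by simp
  qed
  define m where "m n l = measure \<nu> (G n \<inter> piL n -` {l} \<inter> space \<nu>)" for n l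
  have pimeas: "piL n \<in> measurable \<nu> (count_space UNIV)" for n unfolding meq by (rule piL_meas)
  have ident: "(\<integral>s. indicator (G n) s * h (piL n s) \<partial>\<nu>) = (\<Sum>l\<in>partitions n. m n l * h l)"
    if n: "1 \<le> n" for n and h :: "nat list \<Rightarrow> real"
    unfolding m_def
    by (rule integral_finite_range[OF pimeas partitions_finite])
       (use markov[OF n] in \<open>auto simp: space_eq piL_partition Gsets\<close>)
  have Sm: "(\<Sum>l\<in>partitions n. m n l) = measure \<nu> (G n)" if n: "1 \<le> n" for n
  proof -
    have "(\<Sum>l\<in>partitions n. m n l) = (\<integral>s. indicator (G n) s * (\<lambda>_. 1) (piL n s) \<partial>\<nu>)"
      using ident[OF n, of "\<lambda>_. 1"] by simp
    also have "\<dots> = measure \<nu> (G n)"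
      using Gsets[of n] by (simp add: space_eq G_def Int_absorb2)
    finally show ?thesis .
  qed
  have m0: "0 \<le> m n l" for n l unfolding m_def by simp
  define a where "a n = real n powr (- \<gamma>)" for n
  have a0: "0 \<le> a n" for n unfolding a_def by simp
  have aSm: "a n * measure \<nu> (G n) \<le> 1 / 2" if n: "1 \<le> n" for n
  proof -
    have "2 * (C + 1) * a n \<le> eps n" unfolding eps_def a_def using n by simp
    then have "2 * (C + 1) * (a n * measure \<nu> (G n)) \<le> eps n * measure \<nu> (G n)"
      by (simp add: mult.assoc[symmetric] mult_right_mono)
    also have "\<dots> \<le> C" using markov[OF n] by simp
    finally have X: "2 * (C + 1) * (a n * measure \<nu> (G n)) \<le> C" .
    show ?thesis
    proof (rule ccontr)
      assume "\<not> a n * measure \<nu> (G n) \<le> 1 / 2"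
      then have "1/2 < a n * measure \<nu> (G n)" by simp
      from mult_strict_left_mono[OF this, of "2 * (C + 1)"] C0
      have "2 * (C + 1) * (1/2) < 2 * (C + 1) * (a n * measure \<nu> (G n))" by simp
      with X show False by simp
    qed
  qed
  define \<delta> where "\<delta> n = 1 / (2 * real n * real n powr \<gamma>)" for n
  have \<delta>: "0 < \<delta> n \<and> \<delta> n \<le> 1 / 2" if n: "1 \<le> n" for n
  proof -
    have "1 \<le> real n powr \<gamma>" using n assms(1) by (intro ge_one_powr_ge_zero) auto
    moreover have "1 \<le> real n" using n by simp
    ultimately have "1 * 1 \<le> real n * real n powr \<gamma>"
      by (intro mult_mono) auto
    then have "2 \<le> 2 * real n * real n powr \<gamma>" by (simp add: mult.assoc)
    then show ?thesis unfolding \<delta>_def by (auto simp: field_simps)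
  qed
  define ls where "ls n = (if n = 1 then [] else replicate n (1::nat))" for n
  define p where "p n l = (if l \<in> partitions n then a n * m n l + (if l = ls n then \<delta> n else 0)
      + (if l = [n] then 1 - a n * measure \<nu> (G n) - \<delta> n else 0) else 0)" for n l
  define q where "q n = embed_pmf (p n)" for n
  have p0: "0 \<le> p n l" if n: "1 \<le> n" for n l
    using aSm[OF n] \<delta>[OF n] a0[of n] m0[of n l] unfolding p_def by auto
  have psum: "(\<Sum>l\<in>partitions n. p n l) = 1" if n: "1 \<le> n" for n
  proof -
    have "(\<Sum>l\<in>partitions n. p n l) = (\<Sum>l\<in>partitions n. a n * m n l + (if l = ls n then \<delta> n else 0)
      + (if l = [n] then 1 - a n * measure \<nu> (G n) - \<delta> n else 0))"
      unfolding p_def by (rule sum.cong) auto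
    also have "\<dots> = a n * (\<Sum>l\<in>partitions n. m n l) + \<delta> n + (1 - a n * measure \<nu> (G n) - \<delta> n)"
      using lstar_part[OF n] single_part[OF n] partitions_finite[of n]
      by (simp add: sum.distrib sum_distrib_left ls_def)
    also have "\<dots> = 1" using Sm[OF n] by simp
    finally show ?thesis .
  qed
  have prob: "(\<integral>\<^sup>+ l. ennreal (p n l) \<partial>count_space UNIV) = 1" if n: "1 \<le> n" for n
  proof -
    have "(\<integral>\<^sup>+ l. ennreal (p n l) \<partial>count_space UNIV) = (\<Sum>l\<in>partitions n. ennreal (p n l))"
      by (rule nn_integral_count_space'[OF partitions_finite]) (auto simp: p_def)
    also have "\<dots> = ennreal (\<Sum>l\<in>partitions n. p n l)" using p0[OF n] by simp
    finally show ?thesis using psum[OF n] by simp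
  qed
  have pmfq: "pmf (q n) l = p n l" if n: "1 \<le> n" for n l
    unfolding q_def by (rule pmf_embed_pmf) (use p0[OF n] prob[OF n] in auto)
  have setq: "set_pmf (q n) \<subseteq> partitions n" if n: "1 \<le> n" for n
    unfolding q_def using p0[OF n] prob[OF n] by (subst set_embed_pmf) (auto simp: p_def)
  have pmfn: "pmf (q n) [n] < 1" if n: "1 \<le> n" for n
  proof -
    have "m n [n] \<le> (\<Sum>l\<in>partitions n. m n l)"
      by (rule member_le_sum) (use single_part[OF n] partitions_finite m0 in auto)
    then have "a n * m n [n] \<le> a n * measure \<nu> (G n)" using Sm[OF n] a0 by (simp add: mult_left_mono)
    then show ?thesis
      unfolding pmfq[OF n] p_def using single_part[OF n] lstar_ne[OF n] \<delta>[OF n] by (simp add: ls_def)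
  qed
  have Nsets: "{s \<in> Sdown. suminf s < 1} \<in> sets \<nu>"
  proof -
    have "{s \<in> space Sdown_borel. suminf s < 1} \<in> sets Sdown_borel" by measurable
    then show ?thesis by (simp add: sets_eq)
  qed
  have ae1: "AE s in \<nu>. suminf s = 1"
  proof (rule AE_I'[of "{s \<in> Sdown. suminf s < 1}"])
    show "{s \<in> Sdown. suminf s < 1} \<in> null_sets \<nu>" using Nsets null by (simp add: null_sets_def)
    show "{x \<in> space \<nu>. \<not> suminf x = 1} \<subseteq> {s \<in> Sdown. suminf s < 1}"
      using Sdown_D(4) by (force simp: space_eq)
  qed
  have eps_lim': "eps \<longlonglongrightarrow> 0" unfolding eps_def[abs_def] by (rule eps_lim[OF assms(1)])
  have main: "(\<lambda>n. real n powr \<gamma> * qbar n (q n) (\<lambda>s. (1 - s 0) * f s))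
                \<longlonglongrightarrow> (\<integral>s. (1 - s 0) * f s \<partial>\<nu>)"
    if fb: "bounded_Sdown f" and fc: "l1_continuous_Sdown f" for f
  proof -
    obtain B0 where B0: "\<forall>s\<in>Sdown. \<bar>f s\<bar> \<le> B0" using fb unfolding bounded_Sdown_def by blast
    define B where "B = max B0 0"
    have B: "\<And>s. s \<in> Sdown \<Longrightarrow> \<bar>f s\<bar> \<le> B" and B0': "0 \<le> B" using B0 unfolding B_def by force+
    define g where "g s = (1 - s 0) * f s" for s :: "nat \<Rightarrow> real"
    have gB: "\<bar>g s\<bar> \<le> B" if s: "s \<in> Sdown" for s
    proof -
      have "0 \<le> 1 - s 0" "1 - s 0 \<le> 1" using s0le[OF s] Sdown_D(2)[OF s, of 0] by auto
      then show ?thesis unfolding g_def abs_mult using B[OF s] B0'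
        by (metis abs_of_nonneg mult_left_le_one_le mult_mono' order_trans abs_ge_zero)
    qed
    have gmeas: "g \<in> borel_measurable \<nu>"
      unfolding meq g_def using f_measurable[OF fc] by measurable
    define S where "S n s = indicator (G n) s * g (scaled n (piL n s))" for n s
    define I where "I n = (\<integral>s. S n s \<partial>\<nu>)" for n
    define E where "E n = g (scaled n (ls n)) / (2 * real n)" for n
    have eq: "real n powr \<gamma> * qbar n (q n) g = I n + E n" if n: "1 \<le> n" for n
    proof -
      have g1: "g (scaled n [n]) = 0" unfolding g_def scaled_def using n by simp
      have "qbar n (q n) g = (\<Sum>l\<in>partitions n. a n * (m n l * g (scaled n l))
          + (if l = ls n then \<delta> n * g (scaled n l) else 0))"
        unfolding qbar_def pmfq[OF n] p_def
        by (rule sum.cong[OF refl]) (auto simp: g1 algebra_simps)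
      also have "\<dots> = a n * (\<Sum>l\<in>partitions n. m n l * g (scaled n l)) + \<delta> n * g (scaled n (ls n))"
        using lstar_part[OF n] partitions_finite[of n]
        by (simp add: sum.distrib sum_distrib_left ls_def)
      also have "(\<Sum>l\<in>partitions n. m n l * g (scaled n l)) = I n"
        unfolding I_def S_def using ident[OF n, of "\<lambda>l. g (scaled n l)"] by simp
      finally have "real n powr \<gamma> * qbar n (q n) g =
          (real n powr \<gamma> * a n) * I n + (real n powr \<gamma> * \<delta> n) * g (scaled n (ls n))"
        by (simp add: algebra_simps)
      moreover have "real n powr \<gamma> * a n = 1" unfolding a_def using n
        by (simp add: powr_add[symmetric])
      moreover have "real n powr \<gamma> * \<delta> n = 1 / (2 * real n)" unfolding \<delta>_def using n
        by (simp add: field_simps)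
      ultimately show ?thesis unfolding E_def by simp
    qed
    have Elim: "E \<longlonglongrightarrow> 0"
    proof (rule Lim_null_comparison)
      show "\<forall>\<^sub>F n in sequentially. norm (E n) \<le> B * (1 / real n)"
        using eventually_ge_at_top[of 1]
      proof eventually_elim
        case (elim n)
        have "\<bar>g (scaled n (ls n))\<bar> \<le> B"
          by (rule gB, rule scaled_Sdown) (use lstar_part[OF elim] elim in \<open>auto simp: ls_def\<close>)
        then show ?case unfolding E_def using elim B0'
          by (auto simp: field_simps abs_divide intro: order_trans)
      qed
      show "(\<lambda>n. B * (1 / real n)) \<longlonglongrightarrow> 0"
        by (intro tendsto_mult_right_zero tendsto_divide_0[OF tendsto_const]
              filterlim_at_top_imp_at_infinity[OF filterlim_real_sequentially])
    qed
    have Slim: "(\<lambda>n. S n x) \<longlonglongrightarrow> g x" if x: "x \<in> Sdown" and x1: "suminf x = 1" for x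
    proof (cases "x 0 = 1")
      case True
      have "\<forall>\<^sub>F n in sequentially. S n x = 0"
        using eventually_ge_at_top[of 1]
        by eventually_elim (use True eps_pos in \<open>force simp: S_def G_def\<close>)
      then have "(\<lambda>n. S n x) \<longlonglongrightarrow> 0" by (rule tendsto_eventually)
      then show ?thesis using True by (simp add: g_def)
    next
      case False
      then have pos: "0 < 1 - x 0" using Sdown_le1[OF x, of 0] by simp
      define t where "t n = scaled n (piL n x)" for n
      have tS: "\<forall>\<^sub>F n in sequentially. t n \<in> Sdown"
        using eventually_ge_at_top[of 1]
        by eventually_elim (auto simp: t_def intro!: scaled_Sdown piL_partition x)
      have l: "(\<lambda>n. l1dist x (t n)) \<longlonglongrightarrow> 0" unfolding t_def by (rule l1_lim[OF x x1])
      have ft: "(\<lambda>n. f (t n)) \<longlonglongrightarrow> f x" by (rule f_conv[OF fc x tS l])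
      have "(\<lambda>n. t n 0 - x 0) \<longlonglongrightarrow> 0"
      proof (rule Lim_null_comparison[OF _ l])
        show "\<forall>\<^sub>F n in sequentially. norm (t n 0 - x 0) \<le> l1dist x (t n)"
          using tS
        proof eventually_elim
          case (elim n)
          show ?case using l1_coord[OF x elim, of 0] by (simp add: abs_minus_commute)
        qed
      qed
      then have t0: "(\<lambda>n. t n 0) \<longlonglongrightarrow> x 0" by (rule LIM_zero_cancel)
      have lim2: "(\<lambda>n. (1 - t n 0) * f (t n)) \<longlonglongrightarrow> g x"
        unfolding g_def by (intro tendsto_mult tendsto_diff tendsto_const t0 ft)
      have "\<forall>\<^sub>F n in sequentially. eps n < 1 - x 0" using order_tendstoD(2)[OF eps_lim' pos] .
      then have "\<forall>\<^sub>F n in sequentially. (1 - t n 0) * f (t n) = S n x"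
        by eventually_elim (use x in \<open>auto simp: S_def G_def t_def g_def\<close>)
      then show ?thesis by (rule Lim_transform_eventually[OF lim2])
    qed
    have Ilim: "I \<longlonglongrightarrow> (\<integral>s. g s \<partial>\<nu>)"
    proof -
      have "(\<lambda>i. integral\<^sup>L \<nu> (S (Suc i))) \<longlonglongrightarrow> integral\<^sup>L \<nu> g"
      proof (rule integral_dominated_convergence[where w="\<lambda>s. 2 * B * (1 - s 0)"])
        show "g \<in> borel_measurable \<nu>" by (rule gmeas)
        show "S (Suc i) \<in> borel_measurable \<nu>" for i
        proof -
          have "(\<lambda>s. g (scaled (Suc i) (piL (Suc i) s))) \<in> borel_measurable \<nu>"
            using measurable_comp[OF pimeas, of "\<lambda>l. g (scaled (Suc i) l)" borel]
            by (simp add: comp_def)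
          then show ?thesis unfolding S_def[abs_def]
            using Gsets by (intro borel_measurable_times borel_measurable_indicator)
        qed
        show "integrable \<nu> (\<lambda>s. 2 * B * (1 - s 0))" by (intro integrable_mult_right int1)
        show "AE x in \<nu>. (\<lambda>i. S (Suc i) x) \<longlonglongrightarrow> g x"
          using ae1 by (rule AE_mp) (auto simp: space_eq intro!: AE_I2 LIMSEQ_Suc Slim)
        show "AE x in \<nu>. norm (S (Suc i) x) \<le> 2 * B * (1 - x 0)" for i
        proof (rule AE_I2)
          fix x assume "x \<in> space \<nu>"
          then have x: "x \<in> Sdown" by (simp add: space_eq)
          define n where "n = Suc i"
          have n: "1 \<le> n" by (simp add: n_def)
          define t where "t = scaled n (piL n x)"
          have tS: "t \<in> Sdown" unfolding t_def by (intro scaled_Sdown piL_partition x n)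
          show "norm (S (Suc i) x) \<le> 2 * B * (1 - x 0)"
          proof (cases "x \<in> G n")
            case False then show ?thesis
              using s0le[OF x] B0' by (simp add: S_def n_def[symmetric])
          next
            case True
            then have ge: "eps n \<le> 1 - x 0" by (simp add: G_def)
            have h1: "1 / real n \<le> eps n" unfolding eps_def using C0 by simp
            have h2: "x 0 - 1 / real n \<le> t 0" unfolding t_def by (rule t0_ge[OF x n])
            have h3: "t 0 \<le> 1" by (rule Sdown_le1[OF tS])
            have t0: "0 \<le> 1 - t 0" "1 - t 0 \<le> 2 * (1 - x 0)"
              using h3 apply simp
              using h1 h2 ge by (smt (verit))
            have "\<bar>g t\<bar> = (1 - t 0) * \<bar>f t\<bar>" unfolding g_def abs_mult using t0 by simp
            also have "\<dots> \<le> 2 * (1 - x 0) * B"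
              by (rule mult_mono) (use t0 B[OF tS] B0' in auto)
            finally show ?thesis using True by (simp add: S_def t_def[symmetric] n_def[symmetric] algebra_simps)
          qed
        qed
      qed
      then show ?thesis unfolding I_def[abs_def] by (subst filterlim_sequentially_Suc[symmetric])
    qed
    have "(\<lambda>n. I n + E n) \<longlonglongrightarrow> (\<integral>s. g s \<partial>\<nu>) + 0" by (rule tendsto_add[OF Ilim Elim])
    then have "(\<lambda>n. I n + E n) \<longlonglongrightarrow> (\<integral>s. g s \<partial>\<nu>)" by simp
    moreover have "\<forall>\<^sub>F n in sequentially. I n + E n = real n powr \<gamma> * qbar n (q n) g"
      using eventually_ge_at_top[of 1] by eventually_elim (simp add: eq)
    ultimately have "(\<lambda>n. real n powr \<gamma> * qbar n (q n) g) \<longlonglongrightarrow> (\<integral>s. g s \<partial>\<nu>)"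
      by (rule Lim_transform_eventually)
    then show ?thesis unfolding g_def .
  qed
  show ?thesis
  proof (intro exI[of _ q] conjI allI impI)
    fix n :: nat assume n: "1 \<le> n"
    show "set_pmf (q n) \<subseteq> partitions n" by (rule setq[OF n])
    show "pmf (q n) [n] < 1" by (rule pmfn[OF n])
  next
    fix f :: "(nat \<Rightarrow> real) \<Rightarrow> real" assume "bounded_Sdown f \<and> l1_continuous_Sdown f"
    then show "(\<lambda>n. real n powr \<gamma> * qbar n (q n) (\<lambda>s. (1 - s 0) * f s))
                \<longlonglongrightarrow> (\<integral>s. (1 - s 0) * f s \<partial>\<nu>)"
      using main by blast
  qed
qed

end
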